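(* Let $d\ge2$ and $\epsilon>0$. Suppose that for each $t\in[0,\epsilon]$ there are unit vectors $|x(t)\rangle, |y(t)\rangle\in\mathbb{C}^d$, depending continuously on $t$, such that $$\frac{1}{d^2}\sum_{\mathbf{a}\in\{0,\dots,d-1\}^2} (W_\mathbf{a}\otimes W_\mathbf{a})\big(|x(t)\rangle\langle x(t)|\otimes|y(t)\rangle\langle y(t)|\big)(W_\mathbf{a}\otimes W_\mathbf{a})^\dagger = \frac{t}{d}U_{SW} + \frac{1-t}{d^2}I_{d^2}$$ for all $t\in[0,\epsilon]$, and $|x(0)\rangle = |0\rangle$, $|y(0)\rangle = F|0\rangle$. Then this family (i.e. the pair of WH covariant frames $\{W_\mathbf{a}|x(t)\rangle\}$, $\{W_\mathbf{a}|y(t)\rangle\}$, described by the projectors $|x(t)\rangle\langle x(t)|$ and $|y(t)\rangle\langle y(t)|$) cannot be (right-)differentiable at $t=0$.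
   Context: $\{|i\rangle\}_{i=0}^{d-1}$ is the standard basis of $\mathbb{C}^d$, indices mod $d$. Let $\tau=\exp(2\pi i\frac{d+1}{2d})$, $\omega=\tau^2=\exp(2\pi i/d)$, $S=\sum_{i=0}^{d-1}|i+1\rangle\langle i|$, $C=\sum_{i=0}^{d-1}\omega^i|i\rangle\langle i|$, and for $\mathbf{a}=(a_1,a_2)\in\mathbb{Z}^2$ let $W_\mathbf{a}=\tau^{a_1a_2}S^{a_1}C^{a_2}$ (Weyl–Heisenberg operators). $F=\frac{1}{\sqrt d}\sum_{k,l=0}^{d-1}\omega^{kl}|k\rangle\langle l|$ is the discrete Fourier transform. $U_{SW}$ is the swap operator on $\mathbb{C}^d\otimes\mathbb{C}^d$. *)

theory Defs
  imports "HOL-Analysis.Analysis"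
begin

text \<open>Concrete linear algebra on \<open>\<complex>\<^sup>d\<close>: vectors are functions \<open>nat \<Rightarrow> complex\<close>
  (only indices \<open>< d\<close> matter), matrices are functions \<open>nat \<Rightarrow> nat \<Rightarrow> complex\<close>
  (only indices \<open>< n\<close> matter, where n is the dimension). The tensor product
  \<open>\<complex>\<^sup>d \<otimes> \<complex>\<^sup>d\<close> is identified with \<open>\<complex>\<^sup>d\<^sup>2\<close> via \<open>|i\<rangle>|j\<rangle> \<mapsto> |i*d+j\<rangle>\<close>.\<close>

type_synonym cvec = "nat \<Rightarrow> complex"
type_synonym cmat = "nat \<Rightarrow> nat \<Rightarrow> complex"

definition mat_mult :: "nat \<Rightarrow> cmat \<Rightarrow> cmat \<Rightarrow> cmat" where
  "mat_mult n A B = (\<lambda>i j. \<Sum>k<n. A i k * B k j)"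

definition mat_vec :: "nat \<Rightarrow> cmat \<Rightarrow> cvec \<Rightarrow> cvec" where
  "mat_vec n A v = (\<lambda>i. \<Sum>k<n. A i k * v k)"

definition mat_adj :: "cmat \<Rightarrow> cmat" where
  "mat_adj A = (\<lambda>i j. cnj (A j i))"

definition id_mat :: cmat where
  "id_mat = (\<lambda>i j. if i = j then 1 else 0)"

definition mat_pow :: "nat \<Rightarrow> cmat \<Rightarrow> nat \<Rightarrow> cmat" where
  "mat_pow n A k = ((mat_mult n A) ^^ k) id_mat"

definition kron :: "nat \<Rightarrow> cmat \<Rightarrow> cmat \<Rightarrow> cmat" where
  "kron d A B = (\<lambda>i j. A (i div d) (j div d) * B (i mod d) (j mod d))"

definition outer :: "cvec \<Rightarrow> cvec \<Rightarrow> cmat" where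
  "outer x y = (\<lambda>i j. x i * cnj (y j))"

definition ket :: "nat \<Rightarrow> cvec" where
  "ket k = (\<lambda>i. if i = k then 1 else 0)"

definition wh_tau :: "nat \<Rightarrow> complex" where
  "wh_tau d = exp (2 * of_real pi * \<i> * (of_nat d + 1) / (2 * of_nat d))"

definition wh_omega :: "nat \<Rightarrow> complex" where
  "wh_omega d = (wh_tau d) ^ 2"

definition shift_op :: "nat \<Rightarrow> cmat" where
  "shift_op d = (\<lambda>i j. if i = (j + 1) mod d then 1 else 0)"

definition clock_op :: "nat \<Rightarrow> cmat" where
  "clock_op d = (\<lambda>i j. if i = j then (wh_omega d) ^ i else 0)"

definition weyl :: "nat \<Rightarrow> nat \<Rightarrow> nat \<Rightarrow> cmat" where
  "weyl d a1 a2 = (\<lambda>i j. (wh_tau d) ^ (a1 * a2) *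
      mat_mult d (mat_pow d (shift_op d) a1) (mat_pow d (clock_op d) a2) i j)"

definition dft :: "nat \<Rightarrow> cmat" where
  "dft d = (\<lambda>k l. (wh_omega d) ^ (k * l) / of_real (sqrt (real d)))"

definition swap_op :: "nat \<Rightarrow> cmat" where
  "swap_op d = (\<lambda>I J. if I div d = J mod d \<and> I mod d = J div d then 1 else 0)"

definition wh_twirl :: "nat \<Rightarrow> cmat \<Rightarrow> cmat" where
  "wh_twirl d \<rho> = (\<lambda>I J. (1 / of_nat (d^2)) * (\<Sum>a1<d. \<Sum>a2<d.
      mat_mult (d^2) (mat_mult (d^2) (kron d (weyl d a1 a2) (weyl d a1 a2)) \<rho>)
        (mat_adj (kron d (weyl d a1 a2) (weyl d a1 a2))) I J))"

end

theory Submission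
  imports Defs
begin

lemma tau_norm: "cnj (wh_tau d) * wh_tau d = 1"
proof -
  have "norm (wh_tau d) = 1" unfolding wh_tau_def
    by (simp add: norm_exp_eq_Re)
  thus ?thesis by (simp add: complex_norm_square[symmetric] mult.commute)
qed

lemma omega_norm: "cnj (wh_omega d) * wh_omega d = 1"
proof -
  have "cnj (wh_omega d) * wh_omega d = (cnj (wh_tau d) * wh_tau d)^2"
    unfolding wh_omega_def by (simp add: power_mult_distrib)
  thus ?thesis using tau_norm by simp
qed
lemma omega_d: assumes "d > 0" shows "wh_omega d ^ d = 1"
proof -
  have "wh_omega d ^ d = wh_tau d ^ (2*d)" unfolding wh_omega_def by (simp add: power_mult)
  also have "\<dots> = exp (of_nat (2*d) * (2 * of_real pi * \<i> * (of_nat d + 1) / (2 * of_nat d)))"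
    unfolding wh_tau_def by (rule exp_of_nat_mult[symmetric])
  also have "of_nat (2*d) * (2 * of_real pi * \<i> * (of_nat d + 1) / (2 * of_nat d)) = of_nat (d+1) * (2 * of_real pi * \<i>)"
    using assms by (simp add: field_simps)
  also have "exp (of_nat (d+1) * (2 * of_real pi * \<i>)) = 1"
    unfolding exp_of_nat_mult by simp
  finally show ?thesis .
qed

lemma omega_ne1: assumes "d \<ge> 2" shows "wh_omega d \<noteq> 1"
proof -
  have "wh_omega d = exp (of_nat 2 * (2 * of_real pi * \<i> * (of_nat d + 1) / (2 * of_nat d)))"
    unfolding wh_omega_def wh_tau_def by (rule exp_of_nat_mult[symmetric])
  also have "of_nat 2 * (2 * of_real pi * \<i> * (of_nat d + 1) / (2 * of_nat d)) = \<i> * complex_of_real (2 * pi * (real d + 1) / real d)"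
    using assms by (simp add: field_simps)
  finally have w: "wh_omega d = exp (\<i> * complex_of_real (2 * pi * (real d + 1) / real d))" .
  show ?thesis
  proof
    assume "wh_omega d = 1"
    then obtain n :: int where n: "2 * pi * (real d + 1) / real d = of_int (2*n) * pi"
      using w exp_eq_1 by auto
    hence "(2*pi) * (real d + 1) = (2*pi) * (of_int n * real d)" using assms by (simp add: field_simps)
    hence "real d + 1 = of_int n * real d" by (subst (asm) mult_left_cancel) auto
    hence "real_of_int (int d + 1) = real_of_int (n * int d)" by simp
    hence "int d + 1 = n * int d" by (simp only: of_int_eq_iff)
    hence "1 = int d * (n - 1)" by (simp add: algebra_simps)
    hence "int d dvd 1" unfolding dvd_def by blast
    thus False using assms by simp
  qed
qed
lemma omega_mod: assumes "d > 0" shows "wh_omega d ^ n = wh_omega d ^ (n mod d)"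
proof -
  have "n = d * (n div d) + n mod d" by simp
  hence "wh_omega d ^ n = (wh_omega d ^ d) ^ (n div d) * wh_omega d ^ (n mod d)"
    by (metis power_add power_mult)
  thus ?thesis using omega_d[OF assms] by simp
qed

lemma omega_cong: assumes "d > 0" "n mod d = m mod d" shows "wh_omega d ^ n = wh_omega d ^ m"
  using omega_mod[OF assms(1)] assms(2) by metis

lemma geom0: assumes "d \<ge> 2" shows "(\<Sum>k<d. cnj (wh_omega d) ^ k) = 0"
proof -
  let ?w = "cnj (wh_omega d)"
  have "?w \<noteq> 1" using omega_ne1[OF assms] by (metis complex_cnj_one complex_cnj_cnj)
  moreover have "?w ^ d = 1" using omega_d[of d] assms by (simp flip: complex_cnj_power)
  ultimately show ?thesis by (simp add: geometric_sum)
qed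

lemma shift_pow: assumes "i < d" "j < d"
  shows "mat_pow d (shift_op d) n i j = (if i = (j + n) mod d then 1 else 0)"
  using assms(1)
proof (induction n arbitrary: i)
  case 0
  then show ?case using assms by (simp add: mat_pow_def id_mat_def)
next
  case (Suc n)
  have "mat_pow d (shift_op d) (Suc n) i j = (\<Sum>k<d. shift_op d i k * mat_pow d (shift_op d) n k j)"
    by (simp add: mat_pow_def mat_mult_def)
  also have "\<dots> = (\<Sum>k<d. (if k = (j + n) mod d then (if i = (k + 1) mod d then 1 else 0) else 0))"
  proof (rule sum.cong)
    fix k assume k: "k \<in> {..<d}"
    have sh: "shift_op d i k = (if i = (k + 1) mod d then 1 else 0)" by (simp add: shift_op_def)
    show "shift_op d i k * mat_pow d (shift_op d) n k j = (if k = (j + n) mod d then (if i = (k + 1) mod d then 1 else 0) else 0)"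
      using k by (simp only: sh Suc.IH[of k] lessThan_iff) simp
  qed simp
  also have "\<dots> = (if i = ((j + n) mod d + 1) mod d then 1 else 0)"
    using assms by (simp add: sum.delta)
  also have "((j + n) mod d + 1) mod d = (j + Suc n) mod d" by (simp add: mod_Suc_eq)
  finally show ?case .
qed

lemma clock_pow: assumes "i < d" "j < d"
  shows "mat_pow d (clock_op d) n i j = (if i = j then wh_omega d ^ (i * n) else 0)"
  using assms(1)
proof (induction n arbitrary: i)
  case 0
  then show ?case using assms by (simp add: mat_pow_def id_mat_def)
next
  case (Suc n)
  have "mat_pow d (clock_op d) (Suc n) i j = (\<Sum>k<d. clock_op d i k * mat_pow d (clock_op d) n k j)"
    by (simp add: mat_pow_def mat_mult_def)
  also have "\<dots> = (\<Sum>k<d. (if k = i then wh_omega d ^ i * mat_pow d (clock_op d) n i j else 0))"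
    by (rule sum.cong) (auto simp: clock_op_def)
  also have "\<dots> = wh_omega d ^ i * mat_pow d (clock_op d) n i j"
    using Suc.prems by (simp add: sum.delta)
  also have "\<dots> = (if i = j then wh_omega d ^ (i * Suc n) else 0)"
    using Suc by (simp add: power_add)
  finally show ?case .
qed

lemma weyl_entry: assumes "i < d" "j < d"
  shows "weyl d a1 a2 i j = wh_tau d ^ (a1 * a2) * (if i = (j + a1) mod d then wh_omega d ^ (j * a2) else 0)"
proof -
  have "mat_mult d (mat_pow d (shift_op d) a1) (mat_pow d (clock_op d) a2) i j
      = (\<Sum>k<d. (if k = j then (if i = (k + a1) mod d then wh_omega d ^ (j * a2) else 0) else 0))"
    unfolding mat_mult_def by (rule sum.cong) (auto simp: shift_pow clock_pow assms)
  also have "\<dots> = (if i = (j + a1) mod d then wh_omega d ^ (j * a2) else 0)"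
    using assms by (simp add: sum.delta)
  finally show ?thesis unfolding weyl_def by simp
qed

definition smod :: "nat \<Rightarrow> nat \<Rightarrow> nat \<Rightarrow> nat" where
  "smod d i a = (i + d - a) mod d"

lemma smod_iff: assumes "k < d" "i < d" "a \<le> d"
  shows "(i = (k + a) mod d) \<longleftrightarrow> (k = smod d i a)"
proof
  assume h: "i = (k + a) mod d"
  have "smod d i a = ((k + a) mod d + (d - a)) mod d" unfolding smod_def h using assms by simp
  also have "\<dots> = (k + a + (d - a)) mod d" by (simp add: mod_add_left_eq)
  also have "k + a + (d - a) = k + d" using assms by simp
  finally show "k = smod d i a" using assms by simp
next
  assume h: "k = smod d i a"
  have "(k + a) mod d = ((i + d - a) mod d + a) mod d" unfolding h smod_def ..
  also have "\<dots> = (i + d - a + a) mod d" by (simp add: mod_add_left_eq)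
  also have "i + d - a + a = i + d" using assms by simp
  finally show "i = (k + a) mod d" using assms by simp
qed

lemma smod_lt: "d > 0 \<Longrightarrow> smod d i a < d" unfolding smod_def by simp

lemma collapse: assumes "i < d" "a \<le> d"
  shows "(\<Sum>k<d. (if i = (k + a) mod d then F k else 0)) = F (smod d i a)"
proof -
  have "(\<Sum>k<d. (if i = (k + a) mod d then F k else 0)) = (\<Sum>k<d. (if k = smod d i a then F k else 0))"
    by (rule sum.cong) (use assms smod_iff in auto)
  also have "\<dots> = F (smod d i a)" using assms smod_lt[of d i a] by (simp add: sum.delta)
  finally show ?thesis .
qed

lemma sum_sq_aux: fixes m d :: nat shows "(\<Sum>K<m*d. h K) = (\<Sum>k1<m. \<Sum>k2<d. h (k1*d+k2))"
proof (induction m)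
  case 0 then show ?case by simp
next
  case (Suc m)
  have "(\<Sum>K<Suc m*d. h K) = (\<Sum>K<m*d. h K) + (\<Sum>K\<in>{m*d..<m*d+d}. h K)"
    by (simp add: add.commute sum.atLeastLessThan_concat[symmetric] atLeast0LessThan[symmetric])
  also have "(\<Sum>K\<in>{m*d..<m*d+d}. h K) = (\<Sum>k2<d. h (m*d+k2))"
  proof -
    have "sum h {0 + m*d..<d + m*d} = (\<Sum>i\<in>{0..<d}. h (i + m*d))" by (rule sum.shift_bounds_nat_ivl)
    thus ?thesis by (simp add: atLeast0LessThan add.commute)
  qed
  finally show ?case using Suc by simp
qed

lemma sum_sq: fixes d :: nat shows "(\<Sum>K<d^2. h K) = (\<Sum>k1<d. \<Sum>k2<d. h (k1*d+k2))"
  using sum_sq_aux[of h d d] by (simp add: power2_eq_square)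

lemma divmod_pair1: assumes "k2 < (d::nat)" shows "(k1*d+k2) div d = k1"
proof -
  have "d > 0" using assms by simp
  thus ?thesis using assms by simp
qed

lemma divmod_pair2: assumes "k2 < (d::nat)" shows "(k1*d+k2) mod d = k2"
  using assms by simp



lemma kron_pair: assumes "k2 < d" "i2 < d"
  shows "kron d X Y (i1*d+i2) (k1*d+k2) = X i1 k1 * Y i2 k2"
  using assms by (simp add: kron_def divmod_pair1 divmod_pair2)

lemma inner:
  assumes "i1 < d" "i2 < d" "l1 < d" "l2 < d" "a1 < d"
  shows "(\<Sum>K<d^2. kron d (weyl d a1 a2) (weyl d a1 a2) (i1*d+i2) K * kron d A B K (l1*d+l2))
    = (wh_tau d ^ (a1*a2))^2 * wh_omega d ^ (smod d i1 a1 * a2) * wh_omega d ^ (smod d i2 a1 * a2)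
       * A (smod d i1 a1) l1 * B (smod d i2 a1) l2"
proof -
  define G where "G k1 k2 = (wh_tau d ^ (a1*a2))^2 * wh_omega d ^ (k1 * a2) * wh_omega d ^ (k2 * a2)
       * A k1 l1 * B k2 l2" for k1 k2
  have "(\<Sum>K<d^2. kron d (weyl d a1 a2) (weyl d a1 a2) (i1*d+i2) K * kron d A B K (l1*d+l2))
     = (\<Sum>k1<d. \<Sum>k2<d. kron d (weyl d a1 a2) (weyl d a1 a2) (i1*d+i2) (k1*d+k2) * kron d A B (k1*d+k2) (l1*d+l2))"
    by (rule sum_sq)
  also have "\<dots> = (\<Sum>k1<d. \<Sum>k2<d. (if i2 = (k2 + a1) mod d then (if i1 = (k1 + a1) mod d then G k1 k2 else 0) else 0))"
  proof (intro sum.cong refl)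
    fix k1 k2 assume k: "k1 \<in> {..<d}" "k2 \<in> {..<d}"
    have e1: "kron d (weyl d a1 a2) (weyl d a1 a2) (i1*d+i2) (k1*d+k2) = weyl d a1 a2 i1 k1 * weyl d a1 a2 i2 k2"
      using k assms by (simp add: kron_pair)
    have e2: "kron d A B (k1*d+k2) (l1*d+l2) = A k1 l1 * B k2 l2"
      using k assms by (simp add: kron_pair)
    show "kron d (weyl d a1 a2) (weyl d a1 a2) (i1*d+i2) (k1*d+k2) * kron d A B (k1*d+k2) (l1*d+l2)
        = (if i2 = (k2 + a1) mod d then (if i1 = (k1 + a1) mod d then G k1 k2 else 0) else 0)"
      unfolding e1 e2 using k assms by (simp add: weyl_entry G_def power2_eq_square algebra_simps)
  qed
  also have "\<dots> = (\<Sum>k1<d. (if i1 = (k1 + a1) mod d then G k1 (smod d i2 a1) else 0))"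
  proof (rule sum.cong[OF refl])
    fix k1
    show "(\<Sum>k2<d. (if i2 = (k2 + a1) mod d then (if i1 = (k1 + a1) mod d then G k1 k2 else 0) else 0))
      = (if i1 = (k1 + a1) mod d then G k1 (smod d i2 a1) else 0)"
      using collapse[of i2 d a1 "\<lambda>k2. (if i1 = (k1 + a1) mod d then G k1 k2 else 0)"] assms by simp
  qed
  also have "\<dots> = G (smod d i1 a1) (smod d i2 a1)"
    using collapse[of i1 d a1 "\<lambda>k1. G k1 (smod d i2 a1)"] assms by simp
  finally show ?thesis unfolding G_def .
qed

lemma smod_sum: assumes "a \<le> d" "(i1 + i2) mod d = (j1 + j2) mod d"
  shows "(smod d i1 a + smod d i2 a) mod d = (smod d j1 a + smod d j2 a) mod d"
proof -
  have g: "(smod d x a + smod d y a) mod d = ((x + y) mod d + 2*(d - a)) mod d" for x y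
  proof -
    have "(smod d x a + smod d y a) mod d = ((x + (d - a)) + (y + (d - a))) mod d"
      unfolding smod_def using assms(1) by (simp add: mod_add_eq)
    also have "(x + (d - a)) + (y + (d - a)) = (x + y) + 2*(d-a)" by simp
    finally show ?thesis by (simp add: mod_add_left_eq)
  qed
  show ?thesis unfolding g assms(2) ..
qed

lemma omega_phase: assumes "d > 0" "m mod d = m' mod d"
  shows "wh_omega d ^ (m * a) * cnj (wh_omega d ^ (m' * a)) = 1"
proof -
  have "(m * a) mod d = (m' * a) mod d" using assms(2) by (metis mod_mult_left_eq)
  hence "wh_omega d ^ (m * a) = wh_omega d ^ (m' * a)" using omega_cong[OF assms(1)] by blast
  moreover have "cnj (wh_omega d ^ n) * wh_omega d ^ n = 1" for n
    using omega_norm[of d] by (metis complex_cnj_power power_mult_distrib power_one)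
  ultimately show ?thesis by (simp add: mult.commute)
qed

lemma tau_phase: "(wh_tau d ^ n)^2 * (cnj (wh_tau d ^ n))^2 = 1"
proof -
  have "(wh_tau d ^ n)^2 * (cnj (wh_tau d ^ n))^2 = (cnj (wh_tau d) * wh_tau d) ^ (2*n)"
    by (simp add: power_mult_distrib power_mult[symmetric] mult.commute)
  thus ?thesis using tau_norm by simp
qed



lemma cnj_if_prod:
  fixes X t u z :: complex
  shows "X * cnj ((if P then t * u else 0) * (if Q then t * z else 0))
     = (if Q then (if P then X * (cnj t)^2 * cnj u * cnj z else 0) else 0)"
  by (cases P; cases Q) (simp_all add: power2_eq_square mult_ac)

lemma term_entry:
  assumes "i1 < d" "i2 < d" "j1 < d" "j2 < d" "a1 < d" "(i1 + i2) mod d = (j1 + j2) mod d"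
  shows "mat_mult (d^2) (mat_mult (d^2) (kron d (weyl d a1 a2) (weyl d a1 a2)) (kron d A B))
           (mat_adj (kron d (weyl d a1 a2) (weyl d a1 a2))) (i1*d+i2) (j1*d+j2)
         = A (smod d i1 a1) (smod d j1 a1) * B (smod d i2 a1) (smod d j2 a1)"
proof -
  have dpos: "d > 0" and a1le: "a1 \<le> d" using assms by auto
  let ?U = "kron d (weyl d a1 a2) (weyl d a1 a2)"
  let ?tn = "wh_tau d ^ (a1*a2)"
  let ?w = "wh_omega d"
  define C where "C = ?tn^2 * ?w ^ (smod d i1 a1 * a2) * ?w ^ (smod d i2 a1 * a2)"
  define H where "H l1 l2 = C * A (smod d i1 a1) l1 * B (smod d i2 a1) l2 * (cnj ?tn)^2
      * cnj (?w ^ (l1 * a2)) * cnj (?w ^ (l2 * a2))" for l1 l2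
  have "mat_mult (d^2) (mat_mult (d^2) ?U (kron d A B)) (mat_adj ?U) (i1*d+i2) (j1*d+j2)
     = (\<Sum>L<d^2. (\<Sum>K<d^2. ?U (i1*d+i2) K * kron d A B K L) * cnj (?U (j1*d+j2) L))"
    by (simp add: mat_mult_def mat_adj_def)
  also have "\<dots> = (\<Sum>l1<d. \<Sum>l2<d. (\<Sum>K<d^2. ?U (i1*d+i2) K * kron d A B K (l1*d+l2)) * cnj (?U (j1*d+j2) (l1*d+l2)))"
    by (rule sum_sq)
  also have "\<dots> = (\<Sum>l1<d. \<Sum>l2<d. (if j2 = (l2 + a1) mod d then (if j1 = (l1 + a1) mod d then H l1 l2 else 0) else 0))"
  proof (intro sum.cong refl)
    fix l1 l2 assume l: "l1 \<in> {..<d}" "l2 \<in> {..<d}"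
    have e1: "?U (j1*d+j2) (l1*d+l2) = weyl d a1 a2 j1 l1 * weyl d a1 a2 j2 l2"
      using l assms by (simp add: kron_pair)
    show "(\<Sum>K<d^2. ?U (i1*d+i2) K * kron d A B K (l1*d+l2)) * cnj (?U (j1*d+j2) (l1*d+l2))
        = (if j2 = (l2 + a1) mod d then (if j1 = (l1 + a1) mod d then H l1 l2 else 0) else 0)"
    proof -
      have w1: "weyl d a1 a2 j1 l1 = (if j1 = (l1+a1) mod d then ?tn * ?w^(l1*a2) else 0)"
        using l assms by (simp add: weyl_entry)
      have w2: "weyl d a1 a2 j2 l2 = (if j2 = (l2+a1) mod d then ?tn * ?w^(l2*a2) else 0)"
        using l assms by (simp add: weyl_entry)
      show ?thesis unfolding e1 inner[OF assms(1,2) l[simplified] assms(5)] w1 w2 cnj_if_prod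
        unfolding H_def C_def by (simp only: mult.assoc)
    qed
  qed
  also have "\<dots> = (\<Sum>l1<d. (if j1 = (l1 + a1) mod d then H l1 (smod d j2 a1) else 0))"
  proof (rule sum.cong[OF refl])
    fix l1
    show "(\<Sum>l2<d. (if j2 = (l2 + a1) mod d then (if j1 = (l1 + a1) mod d then H l1 l2 else 0) else 0))
      = (if j1 = (l1 + a1) mod d then H l1 (smod d j2 a1) else 0)"
      using collapse[of j2 d a1 "\<lambda>l2. (if j1 = (l1 + a1) mod d then H l1 l2 else 0)"] assms by simp
  qed
  also have "\<dots> = H (smod d j1 a1) (smod d j2 a1)"
    using collapse[of j1 d a1 "\<lambda>l1. H l1 (smod d j2 a1)"] assms by simp
  also have "\<dots> = A (smod d i1 a1) (smod d j1 a1) * B (smod d i2 a1) (smod d j2 a1)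
     * ((?tn^2 * (cnj ?tn)^2) * (?w ^ ((smod d i1 a1 + smod d i2 a1) * a2) * cnj (?w ^ ((smod d j1 a1 + smod d j2 a1) * a2))))"
    unfolding H_def C_def by (simp add: algebra_simps power_add)
  also have "?w ^ ((smod d i1 a1 + smod d i2 a1) * a2) * cnj (?w ^ ((smod d j1 a1 + smod d j2 a1) * a2)) = 1"
    using omega_phase[OF dpos smod_sum[OF a1le assms(6)]] .
  finally show ?thesis using tau_phase by simp
qed



lemma twirl_entry:
  assumes "i1 < d" "i2 < d" "j1 < d" "j2 < d" "(i1 + i2) mod d = (j1 + j2) mod d"
  shows "wh_twirl d (kron d A B) (i1*d+i2) (j1*d+j2)
    = (1 / of_nat d) * (\<Sum>a<d. A (smod d i1 a) (smod d j1 a) * B (smod d i2 a) (smod d j2 a))"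
proof -
  have dpos: "d > 0" using assms by auto
  have "wh_twirl d (kron d A B) (i1*d+i2) (j1*d+j2)
     = (1 / of_nat (d^2)) * (\<Sum>a1<d. \<Sum>a2<d. A (smod d i1 a1) (smod d j1 a1) * B (smod d i2 a1) (smod d j2 a1))"
    unfolding wh_twirl_def
    by (intro arg_cong[where f="\<lambda>z. (1 / of_nat (d^2)) * z"] sum.cong refl term_entry) (use assms in auto)
  also have "\<dots> = (1 / of_nat (d^2)) * (of_nat d * (\<Sum>a1<d. A (smod d i1 a1) (smod d j1 a1) * B (smod d i2 a1) (smod d j2 a1)))"
    by (simp add: sum_distrib_left)
  also have "\<dots> = (1 / of_nat d) * (\<Sum>a<d. A (smod d i1 a) (smod d j1 a) * B (smod d i2 a) (smod d j2 a))"
    using dpos by (simp add: power2_eq_square)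
  finally show ?thesis .
qed

lemma rot_sum: fixes d k :: nat assumes "d > 0"
  shows "(\<Sum>c<d. F ((c + k) mod d)) = (\<Sum>j<d. (F j :: complex))"
proof -
  have inj: "inj_on (\<lambda>c. (c + k) mod d) {..<d}"
  proof (rule inj_onI)
    fix c c' assume c: "c \<in> {..<d}" "c' \<in> {..<d}" and e: "(c + k) mod d = (c' + k) mod d"
    have m: "(z + k) mod d = (z + k mod d) mod d" for z by (rule mod_add_right_eq[symmetric])
    let ?i = "(c + k mod d) mod d"
    have "k mod d \<le> d" using assms by (simp add: less_imp_le)
    moreover have "?i < d" using assms by simp
    ultimately have "c = smod d ?i (k mod d)" "c' = smod d ?i (k mod d)"
      using smod_iff[of c d ?i "k mod d"] smod_iff[of c' d ?i "k mod d"] c e m by auto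
    thus "c = c'" by simp
  qed
  have img: "(\<lambda>c. (c + k) mod d) ` {..<d} = {..<d}"
    using inj assms by (intro endo_inj_surj) auto
  show ?thesis using sum.reindex[OF inj, of F] img by simp
qed

lemma refl_sum: assumes "d > 0"
  shows "(\<Sum>a<d. F (smod d 0 a)) = (\<Sum>k<d. (F k :: complex))"
proof -
  have inj: "inj_on (smod d 0) {..<d}"
  proof (rule inj_onI)
    fix a a' assume a: "a \<in> {..<d}" "a' \<in> {..<d}" and e: "smod d 0 a = smod d 0 a'"
    show "a = a'" using a e unfolding smod_def
      by (cases "a = 0"; cases "a' = 0") auto
  qed
  have img: "smod d 0 ` {..<d} = {..<d}"
    using inj assms by (intro endo_inj_surj) (auto simp: smod_lt)
  show ?thesis using sum.reindex[OF inj, of F] img by simp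
qed

lemma smod_shift: assumes "a \<le> d" shows "smod d i a = (i + smod d 0 a) mod d"
proof -
  have "(i + smod d 0 a) mod d = (i + (d - a)) mod d" unfolding smod_def by (simp add: mod_add_right_eq)
  thus ?thesis unfolding smod_def using assms by simp
qed

lemma smod_mod: assumes "a \<le> d" shows "smod d (i mod d) a = smod d i a"
  unfolding smod_def using assms by (simp add: mod_add_left_eq flip: Nat.add_diff_assoc)

lemma fg_identity:
  assumes "d > 0"
  shows "(\<Sum>j<d. wh_omega d ^ j * A j ((j+1) mod d)) * (\<Sum>k<d. cnj (wh_omega d) ^ k * B ((k+1) mod d) k)
    = (\<Sum>c<d. wh_omega d ^ c * (\<Sum>a<d. A (smod d c a) (smod d ((c+1) mod d) a) * B (smod d 1 a) (smod d 0 a)))"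
proof -
  let ?w = "wh_omega d"
  have "(\<Sum>c<d. ?w ^ c * (\<Sum>a<d. A (smod d c a) (smod d ((c+1) mod d) a) * B (smod d 1 a) (smod d 0 a)))
     = (\<Sum>c<d. ?w ^ c * (\<Sum>k<d. A ((c + k) mod d) ((c + 1 + k) mod d) * B ((1 + k) mod d) k))"
  proof (rule sum.cong[OF refl])
    fix c
    have "(\<Sum>a<d. A (smod d c a) (smod d ((c+1) mod d) a) * B (smod d 1 a) (smod d 0 a))
       = (\<Sum>a<d. (\<lambda>k. A ((c + k) mod d) ((c + 1 + k) mod d) * B ((1 + k) mod d) k) (smod d 0 a))"
    proof (rule sum.cong[OF refl])
      fix a assume "a \<in> {..<d}"
      hence al: "a \<le> d" by simp
      define k where "k = smod d 0 a"
      have e1: "smod d c a = (c + k) mod d" unfolding k_def by (rule smod_shift[OF al])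
      have e2: "smod d ((c+1) mod d) a = (c + 1 + k) mod d" unfolding k_def smod_mod[OF al]
        by (rule smod_shift[OF al])
      have e3: "smod d 1 a = (1 + k) mod d" unfolding k_def by (rule smod_shift[OF al])
      show "A (smod d c a) (smod d ((c+1) mod d) a) * B (smod d 1 a) (smod d 0 a)
        = (\<lambda>k. A ((c + k) mod d) ((c + 1 + k) mod d) * B ((1 + k) mod d) k) (smod d 0 a)"
        unfolding e1 e2 e3 k_def[symmetric] by (rule refl)
    qed
    also have "\<dots> = (\<Sum>k<d. A ((c + k) mod d) ((c + 1 + k) mod d) * B ((1 + k) mod d) k)"
      by (rule refl_sum[OF assms])
    finally show "?w ^ c * (\<Sum>a<d. A (smod d c a) (smod d ((c+1) mod d) a) * B (smod d 1 a) (smod d 0 a))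
       = ?w ^ c * (\<Sum>k<d. A ((c + k) mod d) ((c + 1 + k) mod d) * B ((1 + k) mod d) k)" by simp
  qed
  also have "\<dots> = (\<Sum>k<d. \<Sum>c<d. ?w ^ c * (A ((c + k) mod d) ((c + 1 + k) mod d) * B ((1 + k) mod d) k))"
    by (simp only: sum_distrib_left) (rule sum.swap)
  also have "\<dots> = (\<Sum>k<d. \<Sum>j<d. (?w ^ j * A j ((j+1) mod d)) * (cnj ?w ^ k * B ((k+1) mod d) k))"
  proof (rule sum.cong[OF refl])
    fix k
    define F where "F j = (?w ^ j * A j ((j+1) mod d)) * (cnj ?w ^ k * B ((k+1) mod d) k)" for j
    have "(\<Sum>c<d. ?w ^ c * (A ((c + k) mod d) ((c + 1 + k) mod d) * B ((1 + k) mod d) k))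
        = (\<Sum>c<d. F ((c + k) mod d))"
    proof (rule sum.cong[OF refl])
      fix c
      have wk: "cnj ?w ^ k * ?w ^ k = 1" using omega_norm[of d] by (metis power_mult_distrib power_one)
      have "?w ^ ((c + k) mod d) = ?w ^ c * ?w ^ k"
        using omega_mod[OF assms, of "c+k"] by (simp add: power_add)
      moreover have wk': "?w ^ k * cnj ?w ^ k = 1" using wk by (simp only: mult.commute)
      ultimately have h1: "?w ^ ((c + k) mod d) * cnj ?w ^ k = ?w ^ c" by (simp add: mult.assoc)
      have h2: "((c + k) mod d + 1) mod d = (c + 1 + k) mod d" by (simp add: mod_Suc_eq)
      have h3: "(k + 1) mod d = (1 + k) mod d" by (simp only: add.commute)
      have "F ((c + k) mod d) = (?w ^ ((c + k) mod d) * cnj ?w ^ k) * (A ((c + k) mod d) (((c + k) mod d + 1) mod d) * B ((k + 1) mod d) k)"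
        unfolding F_def by (simp only: mult_ac)
      also have "\<dots> = ?w ^ c * (A ((c + k) mod d) ((c + 1 + k) mod d) * B ((1 + k) mod d) k)"
        unfolding h1 h2 h3 ..
      finally show "?w ^ c * (A ((c + k) mod d) ((c + 1 + k) mod d) * B ((1 + k) mod d) k) = F ((c + k) mod d)"
        by simp
    qed
    also have "\<dots> = (\<Sum>j<d. F j)" by (rule rot_sum[OF assms])
    finally show "(\<Sum>c<d. ?w ^ c * (A ((c + k) mod d) ((c + 1 + k) mod d) * B ((1 + k) mod d) k))
      = (\<Sum>j<d. (?w ^ j * A j ((j+1) mod d)) * (cnj ?w ^ k * B ((k+1) mod d) k))" unfolding F_def .
  qed
  also have "\<dots> = (\<Sum>j<d. ?w ^ j * A j ((j+1) mod d)) * (\<Sum>k<d. cnj ?w ^ k * B ((k+1) mod d) k)"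
    unfolding sum_product by (rule sum.swap)
  finally show ?thesis by simp
qed



lemma endgame:
  fixes f g :: "real \<Rightarrow> complex" and \<epsilon> :: real
  assumes e: "\<epsilon> > 0"
    and df: "f differentiable (at 0 within {0..\<epsilon>})"
    and dg: "g differentiable (at 0 within {0..\<epsilon>})"
    and f0: "f 0 = 0" and g0: "g 0 = 0"
    and fg: "\<forall>t\<in>{0..\<epsilon>}. f t * g t = of_real t"
  shows False
proof -
  obtain f' where f': "(f has_vector_derivative f') (at 0 within {0..\<epsilon>})"
    using df vector_derivative_works by blast
  obtain g' where g': "(g has_vector_derivative g') (at 0 within {0..\<epsilon>})"
    using dg vector_derivative_works by blast
  have "((\<lambda>t. f t * g t) has_vector_derivative (f 0 * g' + f' * g 0)) (at 0 within {0..\<epsilon>})"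
    by (rule has_vector_derivative_mult[OF f' g'])
  hence 1: "((\<lambda>t. f t * g t) has_vector_derivative 0) (at 0 within {0..\<epsilon>})"
    using f0 g0 by simp
  have 2: "((\<lambda>t. f t * g t) has_vector_derivative 1) (at 0 within {0..\<epsilon>})"
  proof (rule has_vector_derivative_transform[where f="\<lambda>t. of_real t"])
    show "0 \<in> {0..\<epsilon>}" using e by simp
    show "\<And>x. x \<in> {0..\<epsilon>} \<Longrightarrow> f x * g x = complex_of_real x" using fg by blast
    show "((\<lambda>t. complex_of_real t) has_vector_derivative 1) (at 0 within {0..\<epsilon>})"
      using has_vector_derivative_of_real[OF DERIV_ident] by simp
  qed
  have nb: "at (0::real) within {0..\<epsilon>} \<noteq> bot"
    using e by (simp add: at_within_Icc_at_right)
  from vector_derivative_unique_within[OF nb 1 2] show False by simp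
qed

lemma pair_lt: assumes "i1 < d" "i2 < (d::nat)" shows "i1*d+i2 < d^2"
proof -
  have "i1*d+i2 < i1*d + d" using assms by simp
  also have "\<dots> = (i1+1)*d" by simp
  also have "\<dots> \<le> d*d" using assms by (intro mult_right_mono) auto
  finally show ?thesis by (simp add: power2_eq_square)
qed

theorem proposition4:
  fixes d :: nat and \<epsilon> :: real and x y :: "real \<Rightarrow> cvec"
  assumes "d \<ge> 2" and "\<epsilon> > 0"
    and unit_x: "\<forall>t\<in>{0..\<epsilon>}. (\<Sum>i<d. (cmod (x t i))^2) = 1"
    and unit_y: "\<forall>t\<in>{0..\<epsilon>}. (\<Sum>i<d. (cmod (y t i))^2) = 1"
    and cont_x: "\<forall>i<d. continuous_on {0..\<epsilon>} (\<lambda>t. x t i)"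
    and cont_y: "\<forall>i<d. continuous_on {0..\<epsilon>} (\<lambda>t. y t i)"
    and twirl: "\<forall>t\<in>{0..\<epsilon>}. \<forall>I<d^2. \<forall>J<d^2.
        wh_twirl d (kron d (outer (x t) (x t)) (outer (y t) (y t))) I J
        = of_real (t / real d) * swap_op d I J
          + of_real ((1 - t) / real (d^2)) * id_mat I J"
    and x0: "\<forall>i<d. x 0 i = ket 0 i"
    and y0: "\<forall>i<d. y 0 i = mat_vec d (dft d) (ket 0) i"
  shows "\<not> ((\<forall>i<d. \<forall>j<d. (\<lambda>t. outer (x t) (x t) i j) differentiable (at 0 within {0..\<epsilon>}))
          \<and> (\<forall>i<d. \<forall>j<d. (\<lambda>t. outer (y t) (y t) i j) differentiable (at 0 within {0..\<epsilon>})))"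
proof
  assume diff: "(\<forall>i<d. \<forall>j<d. (\<lambda>t. outer (x t) (x t) i j) differentiable (at 0 within {0..\<epsilon>}))
          \<and> (\<forall>i<d. \<forall>j<d. (\<lambda>t. outer (y t) (y t) i j) differentiable (at 0 within {0..\<epsilon>}))"
  have d0: "d > 0" and d1: "1 < d" using assms(1) by auto
  let ?w = "wh_omega d"
  define f where "f t = (\<Sum>j<d. ?w ^ j * outer (x t) (x t) j ((j+1) mod d))" for t
  define g where "g t = (\<Sum>k<d. cnj ?w ^ k * outer (y t) (y t) ((k+1) mod d) k)" for t
  have df: "f differentiable (at 0 within {0..\<epsilon>})"
    unfolding f_def using diff d0
    by (intro differentiable_sum differentiable_mult differentiable_const) auto
  have dg: "g differentiable (at 0 within {0..\<epsilon>})"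
    unfolding g_def using diff d0
    by (intro differentiable_sum differentiable_mult differentiable_const) auto
  have f0: "f 0 = 0"
    unfolding f_def
  proof (rule sum.neutral, intro ballI)
    fix j assume j: "j \<in> {..<d}"
    have "(j+1) mod d < d" using d0 by simp
    hence "outer (x 0) (x 0) j ((j+1) mod d) = ket 0 j * cnj (ket 0 ((j+1) mod d))"
      using j x0 by (simp add: outer_def)
    also have "\<dots> = 0" using d1 by (auto simp: ket_def)
    finally show "?w ^ j * outer (x 0) (x 0) j ((j+1) mod d) = 0" by simp
  qed
  have yc: "y 0 i = 1 / of_real (sqrt (real d))" if "i < d" for i
  proof -
    have "y 0 i = (\<Sum>k<d. dft d i k * ket 0 k)" using y0 that by (simp add: mat_vec_def)
    also have "\<dots> = (\<Sum>k<d. if k = 0 then dft d i k else 0)" by (rule sum.cong) (auto simp: ket_def)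
    also have "\<dots> = dft d i 0" using d0 by (simp add: sum.delta)
    finally show ?thesis by (simp add: dft_def)
  qed
  have g0: "g 0 = 0"
  proof -
    have "g 0 = (\<Sum>k<d. cnj ?w ^ k * (1 / of_real (sqrt (real d)) * cnj (1 / of_real (sqrt (real d)))))"
      unfolding g_def by (rule sum.cong) (use d0 yc in \<open>auto simp: outer_def\<close>)
    also have "\<dots> = (\<Sum>k<d. cnj ?w ^ k) * (1 / of_real (sqrt (real d)) * cnj (1 / of_real (sqrt (real d))))"
      by (rule sum_distrib_right[symmetric])
    also have "\<dots> = 0" using geom0[OF assms(1)] by simp
    finally show ?thesis .
  qed
  have fg: "\<forall>t\<in>{0..\<epsilon>}. f t * g t = of_real t"
  proof
    fix t assume t: "t \<in> {0..\<epsilon>}"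
    let ?A = "outer (x t) (x t)" and ?B = "outer (y t) (y t)"
    have S: "(\<Sum>a<d. ?A (smod d c a) (smod d ((c+1) mod d) a) * ?B (smod d 1 a) (smod d 0 a))
        = of_real t * (if c = 0 then 1 else 0)" if c: "c < d" for c
    proof -
      let ?I = "c*d+1" and ?J = "((c+1) mod d)*d+0"
      have cl: "(c+1) mod d < d" using d0 by simp
      have I: "?I < d^2" by (rule pair_lt[OF c d1])
      have J: "?J < d^2" by (rule pair_lt[OF cl d0])
      have te: "wh_twirl d (kron d ?A ?B) ?I ?J = (1 / of_nat d) *
          (\<Sum>a<d. ?A (smod d c a) (smod d ((c+1) mod d) a) * ?B (smod d 1 a) (smod d 0 a))"
        by (rule twirl_entry[OF c d1 cl d0]) (simp add: mod_add_left_eq)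
      have sw: "swap_op d ?I ?J = (if c = 0 then 1 else 0)"
        unfolding swap_op_def using divmod_pair1[OF d1, of c] divmod_pair2[OF d1, of c]
          divmod_pair1[OF d0, of "(c+1) mod d"] divmod_pair2[OF d0, of "(c+1) mod d"] d1
        by auto
      have idm: "id_mat ?I ?J = 0"
      proof -
        have "?I mod d \<noteq> ?J mod d" using divmod_pair2[OF d1, of c] divmod_pair2[OF d0, of "(c+1) mod d"] by simp
        hence "?I \<noteq> ?J" by metis
        thus ?thesis by (simp add: id_mat_def)
      qed
      have tw: "wh_twirl d (kron d ?A ?B) ?I ?J = of_real (t / real d) * swap_op d ?I ?J
          + of_real ((1 - t) / real (d^2)) * id_mat ?I ?J"
        using twirl t I J by blast
      have ot: "(of_real (t / real d) :: complex) = (1 / of_nat d) * of_real t"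
        by (simp add: of_real_divide)
      have "(1 / of_nat d) * (\<Sum>a<d. ?A (smod d c a) (smod d ((c+1) mod d) a) * ?B (smod d 1 a) (smod d 0 a))
          = (1 / of_nat d) * (of_real t * (if c = 0 then 1 else (0::complex)))"
        using tw unfolding te sw idm ot by (simp only: mult_zero_right add_0_right mult.assoc)
      moreover have "(1 / of_nat d :: complex) \<noteq> 0" using d0 by simp
      ultimately show ?thesis using mult_left_cancel by blast
    qed
    have "f t * g t = (\<Sum>c<d. ?w ^ c * (\<Sum>a<d. ?A (smod d c a) (smod d ((c+1) mod d) a) * ?B (smod d 1 a) (smod d 0 a)))"
      unfolding f_def g_def by (rule fg_identity[OF d0])
    also have "\<dots> = (\<Sum>c<d. ?w ^ c * (of_real t * (if c = 0 then 1 else 0)))"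
    proof (rule sum.cong[OF refl])
      fix c assume "c \<in> {..<d}"
      hence cd: "c < d" by simp
      show "?w ^ c * (\<Sum>a<d. ?A (smod d c a) (smod d ((c+1) mod d) a) * ?B (smod d 1 a) (smod d 0 a))
        = ?w ^ c * (of_real t * (if c = 0 then 1 else 0))" unfolding S[OF cd] ..
    qed
    also have "\<dots> = of_real t" using d0 by (simp add: if_distrib sum.delta cong: if_cong)
    finally show "f t * g t = of_real t" .
  qed
  show False by (rule endgame[OF assms(2) df dg f0 g0 fg])
qed

end
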